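(* Let $C=4+\frac{2}{\log2}$ and $x_n^*=\left\lfloor\sqrt{\frac{Cn}{\log n}}\right\rfloor$. There is a constant $C'>0$ such that for all sufficiently large $n$, $$\sum_{x<y\le x_n^*}\Big[\mu(N_n(x)\ge1,\,N_n(y)\ge1)-\widetilde P_n(x,y)\Big]\le C' n^{0.8},$$ where $\widetilde P_n(x,y)=1-(1-\pi_x)^n-(1-\pi_y)^n+(1-\pi_x-\pi_y)^n$.
   Context: $\mu$ is the Gauss measure on $(0,1)$, $d\mu(\omega)=\frac{d\omega}{(\log 2)(1+\omega)}$. For irrational $\omega\in(0,1)$, $a_i(\omega)$ denote its continued fraction partial quotients, and $N_n(x)=\#\{1\le i\le n: a_i(\omega)=x\}$. For $x\in\mathbb{N}$, $\pi_x=\mu(a_1=x)=-\log_2\!\big(1-\frac{1}{(x+1)^2}\big)$. *)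

theory Defs
  imports "HOL-Probability.Probability"
begin

definition gauss_measure :: "real measure" where
  "gauss_measure = density lborel
     (\<lambda>w. ennreal (indicator {0<..<1} w / (ln 2 * (1 + w))))"

definition gauss_map :: "real \<Rightarrow> real" where
  "gauss_map w = 1 / w - of_int \<lfloor>1 / w\<rfloor>"

definition cf_digit :: "nat \<Rightarrow> real \<Rightarrow> nat" where
  "cf_digit i w = nat \<lfloor>1 / ((gauss_map ^^ (i - 1)) w)\<rfloor>"

definition cf_count :: "nat \<Rightarrow> nat \<Rightarrow> real \<Rightarrow> nat" where
  "cf_count n x w = card {i \<in> {1..n}. cf_digit i w = x}"

definition gauss_pi :: "nat \<Rightarrow> real" where
  "gauss_pi x = - log 2 (1 - 1 / (real x + 1)^2)"

definition P_tilde :: "nat \<Rightarrow> nat \<Rightarrow> nat \<Rightarrow> real" where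
  "P_tilde n x y = 1 - (1 - gauss_pi x)^n - (1 - gauss_pi y)^n
                     + (1 - gauss_pi x - gauss_pi y)^n"

definition C_const :: real where
  "C_const = 4 + 2 / ln 2"

definition x_star :: "nat \<Rightarrow> nat" where
  "x_star n = nat \<lfloor>sqrt (C_const * real n / ln (real n))\<rfloor>"

end

theory Submission
  imports Defs
begin

lemma gauss_emeasure_le1: "emeasure gauss_measure A \<le> 1"
proof (cases "A \<in> sets lborel")
  case False
  then show ?thesis unfolding gauss_measure_def
    by (simp add: emeasure_notin_sets)
next
  case True
  define f where "f = (\<lambda>w::real. 1 / (ln 2 * (1 + w)))"
  have fm[measurable]: "f \<in> borel_measurable borel" unfolding f_def by measurable
  have "emeasure gauss_measure A = (\<integral>\<^sup>+ x. ennreal (indicator {0<..<1} x / (ln 2 * (1 + x))) * indicator A x \<partial>lborel)"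
    unfolding gauss_measure_def using True by (subst emeasure_density) auto
  also have "\<dots> \<le> (\<integral>\<^sup>+ x. ennreal (f x) * indicator {0..1} x \<partial>lborel)"
  proof (rule nn_integral_mono)
    fix x :: real
    show "ennreal (indicator {0<..<1} x / (ln 2 * (1 + x))) * indicator A x \<le> ennreal (f x) * indicator {0..1} x"
      by (cases "x \<in> {0<..<1}"; cases "x \<in> A") (auto simp: f_def indicator_def)
  qed
  also have "\<dots> = ennreal (ln (1+1) / ln 2 - ln (1+0) / ln 2)"
  proof (rule nn_integral_FTC_Icc[OF fm])
    fix x :: real assume x: "x \<in> {0..1}"
    have l2: "ln (2::real) > 0" by simp
    have d: "((\<lambda>x. ln (1+x)) has_real_derivative 1/(1+x)) (at x)"
      using x by (auto intro!: derivative_eq_intros)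
    have e: "1/(1+x) / ln 2 = f x" unfolding f_def by simp
    show "((\<lambda>x. ln (1+x) / ln 2) has_real_derivative f x) (at x)"
      using DERIV_cdivide[OF d, of "ln 2"] e by simp
    show "0 \<le> f x" using x unfolding f_def by auto
  qed simp
  also have "\<dots> = 1" by simp
  finally show ?thesis .
qed

lemma gauss_measure_le1: "measure gauss_measure A \<le> 1"
  unfolding measure_def by (rule enn2real_leI) (use gauss_emeasure_le1 in auto)

lemma ln2_lt: "ln (2::real) < 3/4"
proof -
  have "(2::real) < 1 + 3/4 + (3/4)^2/2" by (simp add: power2_eq_square)
  also have "\<dots> \<le> exp (3/4)" by (rule exp_lower_Taylor_quadratic) simp
  finally have "ln (2::real) < ln (exp (3/4))" by (subst ln_less_cancel_iff) auto
  thus ?thesis by simp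
qed

lemma pi_bounds:
  assumes "x \<ge> 1"
  shows "1/(ln 2*(real x+1)^2) \<le> gauss_pi x" "0 \<le> gauss_pi x" "gauss_pi x \<le> 1/2"
proof -
  define u where "u = 1/(real x+1)^2"
  have xx: "(real x + 1)^2 \<ge> 4"
  proof -
    have "real x + 1 \<ge> 2" using assms by simp
    hence "(real x + 1)^2 \<ge> 2^2" by (rule power_mono) simp
    thus ?thesis by simp
  qed
  have u0: "0 < u" unfolding u_def by simp
  have u4: "u \<le> 1/4" unfolding u_def using xx by (simp add: divide_simps)
  have l2: "ln (2::real) > 0" by simp
  have gp: "gauss_pi x = - ln (1 - u) / ln 2"
    unfolding gauss_pi_def u_def log_def by simp
  have "ln (1-u) \<le> (1-u) - 1" using u4 by (intro ln_le_minus_one) simp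
  hence a: "u \<le> - ln (1-u)" by simp
  have e1: "1/(ln 2*(real x+1)^2) = u / ln 2" by (simp add: u_def)
  have e2: "u / ln 2 \<le> - ln (1 - u) / ln 2" by (rule divide_right_mono) (use a l2 in auto)
  show lb: "1/(ln 2*(real x+1)^2) \<le> gauss_pi x"
    unfolding gp e1 by (rule e2)
  show "0 \<le> gauss_pi x" using lb l2 by (smt (verit) divide_nonneg_nonneg zero_le_power2 mult_nonneg_nonneg)
  have "- ln (1-u) = ln (1/(1-u))" using u4 by (simp add: ln_div)
  also have "\<dots> \<le> ln (4/3)" using u4 u0 by (subst ln_le_cancel_iff) (auto simp: divide_simps)
  also have "\<dots> = ln (16/9) / 2"
  proof -
    have "ln ((4/3::real)^2) = 2 * ln (4/3)" by (subst ln_realpow) auto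
    thus ?thesis by (simp add: power2_eq_square)
  qed
  also have "\<dots> \<le> ln 2 / 2" by (subst divide_right_mono) auto
  finally show "gauss_pi x \<le> 1/2" unfolding gp using l2 by (simp add: divide_simps)
qed

lemma pow_exp: assumes "0 \<le> p" "p \<le> 1" shows "(1-p)^n \<le> exp (- (real n * p))"
proof -
  have "(1-p)^n \<le> exp (-p)^n" using assms
    by (intro power_mono) (auto simp: exp_ge_add_one_self[of "-p", simplified])
  also have "\<dots> = exp (real n * (-p))" by (subst exp_of_nat_mult) simp
  finally show ?thesis by simp
qed

lemma term_bound:
  assumes "x \<ge> 1" "y \<ge> 1"
  shows "measure gauss_measure A - P_tilde n x y \<le> (1 - gauss_pi x)^n + (1 - gauss_pi y)^n"
proof -
  have "0 \<le> (1 - gauss_pi x - gauss_pi y)^n"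
    using pi_bounds[OF assms(1)] pi_bounds[OF assms(2)] by (intro zero_le_power) simp
  thus ?thesis using gauss_measure_le1[of A] unfolding P_tilde_def by simp
qed

lemma term_exp:
  assumes "x \<ge> 1" "n \<ge> 3" "(real x + 1)^2 \<le> 5/ln 2 * (real n / ln (real n))"
  shows "(1 - gauss_pi x)^n \<le> real n powr (-0.2)"
proof -
  have l2: "ln (2::real) > 0" by simp
  have ln0: "ln (real n) > 0" using assms(2) by simp
  have n0: "real n > 0" using assms(2) by simp
  have "1/(ln 2 * (5/ln 2 * (real n / ln (real n)))) \<le> 1/(ln 2*(real x+1)^2)"
    using assms(3) l2 ln0 n0 by (intro divide_left_mono mult_left_mono mult_pos_pos) auto
  also have "\<dots> \<le> gauss_pi x" by (rule pi_bounds(1)[OF assms(1)])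
  finally have "ln (real n) / (5 * real n) \<le> gauss_pi x" using l2 by (simp add: field_simps)
  hence "real n * (ln (real n) / (5 * real n)) \<le> real n * gauss_pi x"
    by (intro mult_left_mono) auto
  hence b: "ln (real n) / 5 \<le> real n * gauss_pi x" using n0 by simp
  have "(1 - gauss_pi x)^n \<le> exp (- (real n * gauss_pi x))"
    using pi_bounds[OF assms(1)] by (intro pow_exp) auto
  also have "\<dots> \<le> exp (-0.2 * ln (real n))" using b by simp
  also have "\<dots> = real n powr (-0.2)" using n0 by (simp add: powr_def)
  finally show ?thesis .
qed

lemma eventually_good:
  "\<forall>\<^sub>F n in sequentially. n \<ge> 3 \<and> 2 * sqrt (C_const * (real n / ln (real n))) + 1 \<le> (3/ln 2 - 4) * (real n / ln (real n))"
proof -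
  define d :: real where "d = 3/ln 2 - 4"
  have l2: "ln (2::real) > 0" by simp
  have d0: "d > 0" unfolding d_def using ln2_lt l2 by (simp add: field_simps)
  have C0: "C_const > 0" unfolding C_const_def using l2 by (simp add: add_pos_pos)
  define T where "T = max 1 (((2 * sqrt C_const + 1)/d)^2)"
  define N where "N = nat \<lceil>4*T^2\<rceil> + 3"
  show ?thesis unfolding eventually_sequentially
  proof (intro exI allI impI)
    fix n assume nN: "N \<le> n"
    hence n3: "n \<ge> 3" unfolding N_def by simp
    have n0: "real n > 0" using n3 by simp
    have ln0: "ln (real n) > 0" using n3 by simp
    have "real n \<ge> 4*T^2" using nN unfolding N_def by linarith
    have sq: "sqrt (real n) \<ge> 2*T"
    proof -
      have "sqrt (real n) \<ge> sqrt (4*T^2)" using \<open>real n \<ge> 4*T^2\<close> by (rule real_sqrt_le_mono)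
      moreover have "sqrt (4*T^2) = 2*T" unfolding T_def by (simp add: real_sqrt_mult)
      ultimately show ?thesis by simp
    qed
    have "ln (real n) = 2 * ln (sqrt (real n))" using n0 by (simp add: ln_sqrt)
    also have "\<dots> \<le> 2 * (sqrt (real n) - 1)" using n0 ln_le_minus_one[of "sqrt (real n)"] by simp
    also have "\<dots> \<le> 2 * sqrt (real n)" by simp
    finally have lnb: "ln (real n) \<le> 2 * sqrt (real n)" .
    define t where "t = real n / ln (real n)"
    have "sqrt (real n) / 2 \<le> t"
    proof -
      have "sqrt (real n) * ln (real n) \<le> sqrt (real n) * (2 * sqrt (real n))"
        using lnb by (intro mult_left_mono) auto
      also have "\<dots> = 2 * real n" using n0 by (simp add: algebra_simps)
      finally show ?thesis unfolding t_def using ln0 by (simp add: field_simps)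
    qed
    hence tT: "t \<ge> T" using sq by simp
    have T1: "T \<ge> 1" unfolding T_def by simp
    have st: "sqrt t \<ge> (2 * sqrt C_const + 1)/d"
    proof -
      have "sqrt t \<ge> sqrt (((2 * sqrt C_const + 1)/d)^2)"
        using tT unfolding T_def by (intro real_sqrt_le_mono) simp
      thus ?thesis using d0 C0 by simp
    qed
    have st1: "sqrt t \<ge> 1" using tT T1 by simp
    have "2 * sqrt (C_const * t) + 1 = 2 * sqrt C_const * sqrt t + 1" by (simp add: real_sqrt_mult)
    also have "\<dots> \<le> (2 * sqrt C_const + 1) * sqrt t" using st1 by (simp add: algebra_simps)
    also have "\<dots> \<le> (d * sqrt t) * sqrt t"
      using st d0 st1 by (intro mult_right_mono) (auto simp: field_simps)
    also have "\<dots> = d * t" using tT T1 by (simp add: mult.assoc)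
    finally show "n \<ge> 3 \<and> 2 * sqrt (C_const * (real n / ln (real n))) + 1 \<le> (3/ln 2 - 4) * (real n / ln (real n))"
      using n3 unfolding t_def d_def by simp
  qed
qed

theorem lemma12:
  shows "\<exists>C'>0. \<forall>\<^sub>F n in sequentially.
    (\<Sum>(x, y) \<in> {(x, y). 1 \<le> x \<and> x < y \<and> y \<le> x_star n}.
       measure gauss_measure {w \<in> {0<..<1}. cf_count n x w \<ge> 1 \<and> cf_count n y w \<ge> 1}
       - P_tilde n x y)
    \<le> C' * real n powr 0.8"
proof -
  have l2: "ln (2::real) > 0" by simp
  have C0: "C_const > 0" unfolding C_const_def using l2 by (simp add: add_pos_pos)
  have Cd: "C_const + (3/ln 2 - 4) = 5 / ln 2" unfolding C_const_def by (simp add: field_simps)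
  show ?thesis
  proof (intro exI conjI)
    show "2 * C_const > 0" using C0 by simp
    show "\<forall>\<^sub>F n in sequentially.
    (\<Sum>(x, y) \<in> {(x, y). 1 \<le> x \<and> x < y \<and> y \<le> x_star n}.
       measure gauss_measure {w \<in> {0<..<1}. cf_count n x w \<ge> 1 \<and> cf_count n y w \<ge> 1}
       - P_tilde n x y)
    \<le> (2 * C_const) * real n powr 0.8"
    proof (rule eventually_mono[OF eventually_good], elim conjE)
      fix n :: nat
      assume n3: "n \<ge> 3"
        and H: "2 * sqrt (C_const * (real n / ln (real n))) + 1 \<le> (3/ln 2 - 4) * (real n / ln (real n))"
      define t where "t = real n / ln (real n)"
      define sq where "sq = sqrt (C_const * t)"
      define m where "m = x_star n"
      define S where "S = {(x, y). 1 \<le> x \<and> x < y \<and> y \<le> m}"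
      have n0: "real n > 0" using n3 by simp
      have ln1: "ln (real n) \<ge> 1"
      proof -
        have "exp 1 \<le> real n" using exp_le n3 by linarith
        hence "ln (exp 1) \<le> ln (real n)" using n0 by (subst ln_le_cancel_iff) auto
        thus ?thesis by simp
      qed
      have t0: "t \<ge> 0" unfolding t_def using n0 ln1 by simp
      have tn: "t \<le> real n" unfolding t_def using n0 ln1 by (simp add: divide_simps)
      have sq0: "sq \<ge> 0" unfolding sq_def using C0 t0 by simp
      have sq2: "sq^2 = C_const * t" unfolding sq_def using C0 t0 by simp
      have msq: "real m \<le> sq"
      proof -
        have e: "sq = sqrt (C_const * real n / ln (real n))" unfolding sq_def t_def by simp
        have "\<lfloor>sq\<rfloor> \<ge> 0" using sq0 by simp
        hence "real (nat \<lfloor>sq\<rfloor>) = of_int \<lfloor>sq\<rfloor>" by simp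
        also have "\<dots> \<le> sq" by (rule of_int_floor_le)
        finally show ?thesis unfolding m_def x_star_def e[symmetric] .
      qed
      have Hs: "2 * sq + 1 \<le> (3/ln 2 - 4) * t" using H unfolding sq_def t_def .
      have zb: "(real z + 1)^2 \<le> 5/ln 2 * (real n / ln (real n))" if "z \<le> m" for z
      proof -
        have "real z + 1 \<le> sq + 1" using that msq by linarith
        hence "(real z + 1)^2 \<le> (sq + 1)^2" by (rule power_mono) simp
        also have "\<dots> = sq^2 + 2 * sq + 1" by (simp add: power2_eq_square algebra_simps)
        also have "\<dots> \<le> C_const * t + (3/ln 2 - 4) * t" using sq2 Hs by simp
        also have "\<dots> = (C_const + (3/ln 2 - 4)) * t" by (rule distrib_right[symmetric])
        also have "\<dots> = 5/ln 2 * t" by (simp only: Cd)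
        finally show ?thesis unfolding t_def .
      qed
      have tb: "measure gauss_measure {w \<in> {0<..<1}. cf_count n x w \<ge> 1 \<and> cf_count n y w \<ge> 1}
               - P_tilde n x y \<le> 2 * real n powr (-0.2)" if "(x,y) \<in> S" for x y
      proof -
        have xy: "1 \<le> x" "1 \<le> y" "x \<le> m" "y \<le> m" using that unfolding S_def by auto
        have "measure gauss_measure {w \<in> {0<..<1}. cf_count n x w \<ge> 1 \<and> cf_count n y w \<ge> 1}
               - P_tilde n x y \<le> (1 - gauss_pi x)^n + (1 - gauss_pi y)^n"
          by (rule term_bound) (use xy in auto)
        also have "\<dots> \<le> real n powr (-0.2) + real n powr (-0.2)"
          using term_exp[OF xy(1) n3 zb[OF xy(3)]] term_exp[OF xy(2) n3 zb[OF xy(4)]] by linarith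
        finally show ?thesis by simp
      qed
      have "(\<Sum>(x, y) \<in> S. measure gauss_measure {w \<in> {0<..<1}. cf_count n x w \<ge> 1 \<and> cf_count n y w \<ge> 1}
               - P_tilde n x y) \<le> real (card S) * (2 * real n powr (-0.2))"
        by (rule sum_bounded_above) (use tb in auto)
      also have "\<dots> \<le> (C_const * real n) * (2 * real n powr (-0.2))"
      proof (rule mult_right_mono)
        have sub: "S \<subseteq> {1..m} \<times> {1..m}" unfolding S_def by auto
        have "card S \<le> card ({1..m} \<times> {1..m})" by (rule card_mono[OF _ sub]) simp
        hence "card S \<le> m * m" by (simp add: card_cartesian_product)
        hence "real (card S) \<le> real m * real m" by (metis of_nat_le_iff of_nat_mult)
        also have "\<dots> \<le> sq * sq" using msq by (intro mult_mono) auto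
        also have "\<dots> = C_const * t" using sq2 by (simp add: power2_eq_square)
        also have "\<dots> \<le> C_const * real n" using tn C0 by simp
        finally show "real (card S) \<le> C_const * real n" .
      qed simp
      also have "\<dots> = (2 * C_const) * (real n * real n powr (-0.2))" by (simp add: algebra_simps)
      also have "real n * real n powr (-0.2) = real n powr 0.8"
      proof -
        have "real n * real n powr (-0.2) = real n powr 1 * real n powr (-0.2)" using n0 by simp
        also have "\<dots> = real n powr (1 + (-0.2))" by (rule powr_add[symmetric])
        also have "(1 + (-0.2::real)) = 0.8" by simp
        finally show ?thesis .
      qed
      finally show "(\<Sum>(x, y) \<in> {(x, y). 1 \<le> x \<and> x < y \<and> y \<le> x_star n}.
       measure gauss_measure {w \<in> {0<..<1}. cf_count n x w \<ge> 1 \<and> cf_count n y w \<ge> 1}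
       - P_tilde n x y) \<le> (2 * C_const) * real n powr 0.8" unfolding S_def m_def .
    qed
  qed
qed

end
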